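(* Let $p$ be an odd prime with $3 \mid (p-1)$. Then there exists an MDS $(3p,\,10)_{p}$ symbol-pair code, i.e., a code $\mathcal{C}\subseteq \mathbb{F}_p^{3p}$ with minimum symbol-pair distance $d_p(\mathcal{C})=10$ and $|\mathcal{C}| = p^{3p-10+2}$.
   Context: For a vector $\mathbf{x}=(x_0,\dots,x_{n-1})\in\mathbb{F}_q^n$ (indices taken modulo $n$), the symbol-pair distance between $\mathbf{x},\mathbf{y}\in\mathbb{F}_q^n$ is $d_p(\mathbf{x},\mathbf{y})=|\{i\in\mathbb{Z}_n : (x_i,x_{i+1})\neq(y_i,y_{i+1})\}|$. The minimum symbol-pair distance of a code $\mathcal{C}\subseteq\mathbb{F}_q^n$ is $d_p(\mathcal{C})=\min\{d_p(\mathbf{x},\mathbf{y}) : \mathbf{x},\mathbf{y}\in\mathcal{C},\ \mathbf{x}\neq\mathbf{y}\}$. Any code of length $n$ over $\mathbb{F}_q$ with minimum symbol-pair distance $d_p$ (where $2\le d_p\le n$) satisfies the Singleton-type bound $|\mathcal{C}|\le q^{n-d_p+2}$; a code attaining equality is called an MDS symbol-pair code. An $(n,d_p)_q$ symbol-pair code is a code of length $n$ over $\mathbb{F}_q$ with minimum symbol-pair distance $d_p$. *)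

theory Defs
  imports "HOL-Number_Theory.Number_Theory"
begin

text \<open>Words of length n over F_q are represented as lists of length n with entries
  in {0..<q} (the elements of the prime field F_p identified with residues).
  Indices are taken modulo n (cyclic pairs).\<close>

definition words :: "nat \<Rightarrow> nat \<Rightarrow> nat list set" where
  "words q n = {x. length x = n \<and> set x \<subseteq> {0..<q}}"

definition pair_dist :: "nat list \<Rightarrow> nat list \<Rightarrow> nat" where
  "pair_dist x y = (let n = length x in
     card {i \<in> {0..<n}. (x ! i, x ! ((i + 1) mod n)) \<noteq> (y ! i, y ! ((i + 1) mod n))})"

definition min_pair_dist :: "nat list set \<Rightarrow> nat" where
  "min_pair_dist C = Min {pair_dist x y | x y. x \<in> C \<and> y \<in> C \<and> x \<noteq> y}"

end

theory Submission
  imports Defs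
begin


lemma vander:
  fixes p :: int and t c :: "nat \<Rightarrow> int"
  assumes pr: "prime p" and fin: "finite J"
    and inj: "\<forall>a\<in>J. \<forall>b\<in>J. p dvd (t a - t b) \<longrightarrow> a = b"
    and mom: "\<forall>k<card J. p dvd (\<Sum>j\<in>J. c j * t j ^ k)"
  shows "\<forall>j\<in>J. p dvd c j"
  using fin inj mom
proof (induction J arbitrary: c rule: finite_induct)
  case empty
  then show ?case by simp
next
  case (insert x F)
  define c' where "c' j = c j * (t j - t x)" for j
  have S: "(\<Sum>j\<in>insert x F. c j * t j ^ m) = c x * t x ^ m + (\<Sum>j\<in>F. c j * t j ^ m)" for m
    using insert.hyps by simp
  have "\<forall>k<card F. p dvd (\<Sum>j\<in>F. c' j * t j ^ k)"
  proof (intro allI impI)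
    fix k assume k: "k < card F"
    have "(\<Sum>j\<in>F. c' j * t j ^ k) = (\<Sum>j\<in>F. c j * t j ^ Suc k) - t x * (\<Sum>j\<in>F. c j * t j ^ k)"
      by (simp add: c'_def sum_subtractf sum_distrib_left algebra_simps)
    also have "\<dots> = (\<Sum>j\<in>insert x F. c j * t j ^ Suc k) - t x * (\<Sum>j\<in>insert x F. c j * t j ^ k)"
      unfolding S by (simp add: algebra_simps)
    finally have e: "(\<Sum>j\<in>F. c' j * t j ^ k) = (\<Sum>j\<in>insert x F. c j * t j ^ Suc k) - t x * (\<Sum>j\<in>insert x F. c j * t j ^ k)" .
    have "Suc k < card (insert x F)" "k < card (insert x F)" using k insert.hyps by auto
    then have d1: "p dvd (\<Sum>j\<in>insert x F. c j * t j ^ Suc k)"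
      and d2: "p dvd (\<Sum>j\<in>insert x F. c j * t j ^ k)" using insert.prems(2) by blast+
    show "p dvd (\<Sum>j\<in>F. c' j * t j ^ k)" unfolding e by (rule dvd_diff[OF d1 dvd_mult[OF d2]])
  qed
  moreover have "\<forall>a\<in>F. \<forall>b\<in>F. p dvd (t a - t b) \<longrightarrow> a = b" using insert.prems(1) by blast
  ultimately have h: "\<forall>j\<in>F. p dvd c' j" using insert.IH by blast
  have hF: "\<forall>j\<in>F. p dvd c j"
  proof
    fix j assume j: "j \<in> F"
    then have "p dvd c j * (t j - t x)" using h c'_def by auto
    moreover have "\<not> p dvd (t j - t x)" using insert.prems(1) j insert.hyps by auto
    ultimately show "p dvd c j" using pr by (simp add: prime_dvd_mult_iff)
  qed
  have "p dvd (\<Sum>j\<in>insert x F. c j * t j ^ 0)" using insert.prems(2) insert.hyps by auto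
  then have "p dvd c x + (\<Sum>j\<in>F. c j)" using S[of 0] by simp
  moreover have "p dvd (\<Sum>j\<in>F. c j)" using hF by (simp add: dvd_sum)
  ultimately have "p dvd c x" by (metis add_diff_cancel_right' dvd_diff)
  then show ?case using hF by auto
qed

definition wt :: "nat \<Rightarrow> nat \<Rightarrow> int" where
  "wt j i = (if j < 6 then (if i mod 3 = j div 2 then int i ^ (j mod 2) else 0) else int i ^ (j - 4))"

locale core =
  fixes p n :: nat and c :: "nat \<Rightarrow> int" and D :: "nat set"
  assumes pr: "prime p" and p7: "7 \<le> p" and nd: "n = 3 * p" and Dsub: "D \<subseteq> {..<n}"
    and cz: "\<And>i. i < n \<Longrightarrow> i \<notin> D \<Longrightarrow> c i = 0"
    and chk: "\<And>j. j < 8 \<Longrightarrow> int p dvd (\<Sum>i<n. c i * wt j i)"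
    and Pc: "card {i. i < n \<and> (i \<in> D \<or> (i + 1) mod n \<in> D)} \<le> 9"
begin

definition "Dq q = {i\<in>D. i mod 3 = q}"
definition "sc i = (i + 1) mod n"
definition "P = {i. i < n \<and> (i \<in> D \<or> sc i \<in> D)}"
definition "Z q \<longleftrightarrow> (\<forall>i\<in>Dq q. int p dvd c i)"

lemma finD: "finite D" using Dsub finite_subset by blast
lemma finDq: "finite (Dq q)" using finD by (simp add: Dq_def)
lemma DqD: "Dq q \<subseteq> D" by (auto simp: Dq_def)
lemma Pcard: "card P \<le> 9" using Pc unfolding P_def sc_def .
lemma finP: "finite P" unfolding P_def by simp
lemma DP: "D \<subseteq> P" using Dsub unfolding P_def by auto
lemma prI: "prime (int p)" using pr by simp

lemma mom:
  assumes "q < 3" "k < 2"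
  shows "int p dvd (\<Sum>i\<in>Dq q. c i * int i ^ k)"
proof -
  have j: "2 * q + k < 8" "(2 * q + k) div 2 = q" "(2 * q + k) mod 2 = k" using assms by auto
  have "(\<Sum>i<n. c i * wt (2 * q + k) i) = (\<Sum>i<n. if i mod 3 = q then c i * int i ^ k else 0)"
    using j assms by (intro sum.cong) (auto simp: wt_def)
  also have "\<dots> = (\<Sum>i\<in>{i\<in>{..<n}. i mod 3 = q}. c i * int i ^ k)"
    using sum.inter_filter[of "{..<n}" "\<lambda>i. c i * int i ^ k" "\<lambda>i. i mod 3 = q"] by simp
  also have "\<dots> = (\<Sum>i\<in>Dq q. c i * int i ^ k)"
    using Dsub cz by (intro sum.mono_neutral_right) (auto simp: Dq_def)
  finally show ?thesis using chk[OF j(1)] by simp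
qed

lemma glob:
  assumes "k = 2 \<or> k = 3"
  shows "int p dvd (\<Sum>i\<in>D. c i * int i ^ k)"
proof -
  have j: "k + 4 < 8" using assms by auto
  have "(\<Sum>i<n. c i * wt (k + 4) i) = (\<Sum>i<n. c i * int i ^ k)"
    using assms by (intro sum.cong) (auto simp: wt_def)
  also have "\<dots> = (\<Sum>i\<in>D. c i * int i ^ k)"
    using Dsub cz by (intro sum.mono_neutral_right) auto
  finally show ?thesis using chk[OF j] by simp
qed

lemma injcls:
  assumes "i < n" "i' < n" "i mod 3 = i' mod 3" "int p dvd (int i - int i')"
  shows "i = i'"
proof -
  have c3: "[i = i'] (mod 3)" using assms(3) by (simp add: cong_def)
  have cp: "[i = i'] (mod p)"
    using assms(4) by (metis cong_iff_dvd_diff cong_int_iff)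
  have "coprime 3 p"
  proof -
    have "\<not> p dvd 3" using p7 by (auto dest: dvd_imp_le)
    then have "coprime p 3" using pr by (simp add: prime_imp_coprime)
    then show ?thesis by (simp add: coprime_commute)
  qed
  then have "[i = i'] (mod 3 * p)" using c3 cp by (simp add: coprime_cong_mult_nat)
  then show ?thesis using assms(1,2) nd cong_less_modulus_unique_nat by auto
qed

lemma vcls:
  assumes "q < 3" and "\<forall>k<card (Dq q). int p dvd (\<Sum>i\<in>Dq q. d i * int i ^ k)"
  shows "\<forall>i\<in>Dq q. int p dvd d i"
proof (rule vander[OF prI finDq _ assms(2)])
  show "\<forall>a\<in>Dq q. \<forall>b\<in>Dq q. int p dvd (int a - int b) \<longrightarrow> a = b"
    using Dsub injcls by (auto simp: Dq_def) (metis lessThan_iff subsetD)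
qed

lemma L_small:
  assumes "q < 3" "card (Dq q) \<le> 2"
  shows "Z q"
  unfolding Z_def using assms by (intro vcls) (auto intro: mom)

lemma split_sum:
  assumes "A \<subseteq> D"
  shows "(\<Sum>i\<in>D. f i) = (\<Sum>i\<in>A. f i) + (\<Sum>i\<in>D - A. f i)"
  using sum.subset_diff[OF assms finD] by (simp add: add.commute)

lemma L_one:
  assumes q: "q < 3" and c4: "card (Dq q) \<le> 4"
    and oth: "\<And>i. i \<in> D \<Longrightarrow> i mod 3 \<noteq> q \<Longrightarrow> int p dvd c i"
  shows "Z q"
  unfolding Z_def
proof (rule vcls[OF q], intro allI impI)
  fix k assume "k < card (Dq q)"
  then have k: "k < 4" using c4 by simp
  show "int p dvd (\<Sum>i\<in>Dq q. c i * int i ^ k)"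
  proof (cases "k < 2")
    case True then show ?thesis using mom q by blast
  next
    case False
    then have "k = 2 \<or> k = 3" using k by auto
    then have g: "int p dvd (\<Sum>i\<in>D. c i * int i ^ k)" by (rule glob)
    have r: "int p dvd (\<Sum>i\<in>D - Dq q. c i * int i ^ k)"
      by (intro dvd_sum dvd_mult2 oth) (auto simp: Dq_def)
    have e: "(\<Sum>i\<in>Dq q. c i * int i ^ k) = (\<Sum>i\<in>D. c i * int i ^ k) - (\<Sum>i\<in>D - Dq q. c i * int i ^ k)"
      using split_sum[OF DqD[of q], where f="\<lambda>i. c i * int i ^ k"] by simp
    show ?thesis unfolding e by (rule dvd_diff[OF g r])
  qed
qed

lemma sc_lt: "sc i < n" unfolding sc_def using p7 nd by simp

lemma sc_mod3: "sc i mod 3 = (i + 1) mod 3"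
  unfolding sc_def using nd by (simp add: mod_mod_cancel)

lemma sc_modp: "int p dvd (int (sc i) - (int i + 1))"
proof -
  have "sc i mod p = (i + 1) mod p" unfolding sc_def using nd by (simp add: mod_mod_cancel)
  then have "[sc i = i + 1] (mod p)" by (simp add: cong_def)
  then have "[int (sc i) = int (i + 1)] (mod int p)" using cong_int_iff by blast
  then show ?thesis unfolding cong_iff_dvd_diff by (simp add: add.commute)
qed

lemma sc_if: "i < n \<Longrightarrow> sc i = (if i + 1 < n then i + 1 else 0)"
proof -
  assume i: "i < n"
  show ?thesis
  proof (cases "i + 1 < n")
    case False
    then have "i + 1 = n" using i by auto
    then show ?thesis unfolding sc_def by simp
  qed (simp add: sc_def)
qed

lemma sc_inj: "inj_on sc {..<n}"
proof
  fix x y assume x: "x \<in> {..<n}" and y: "y \<in> {..<n}" and e: "sc x = sc y"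
  then show "x = y" using sc_if[of x] sc_if[of y] by (auto split: if_splits)
qed

lemma sc_surj: "sc ` {..<n} = {..<n}"
  using sc_inj sc_lt by (intro endo_inj_surj) auto


lemma L_two:
  assumes q: "q < 3" and q': "q' = (q + 1) mod 3" and c3: "card (Dq q) = 3"
    and sh: "sc ` Dq q = Dq q'"
    and oth: "\<And>i. i \<in> D \<Longrightarrow> i mod 3 \<noteq> q \<Longrightarrow> i mod 3 \<noteq> q' \<Longrightarrow> int p dvd c i"
  shows "Z q \<and> Z q'"
proof -
  define A where "A = Dq q"
  define b where "b j = c (sc j)" for j
  define Sa where "Sa k = (\<Sum>j\<in>A. c j * int j ^ k)" for k
  define Sb where "Sb k = (\<Sum>j\<in>A. b j * int j ^ k)" for k
  define Tb where "Tb k = (\<Sum>j\<in>A. b j * (int j + 1) ^ k)" for k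
  define F where "F k = (\<Sum>i\<in>Dq q'. c i * int i ^ k)" for k
  have q'3: "q' < 3" using q' by auto
  have qq: "q \<noteq> q'" using q q' by presburger
  have finA: "finite A" unfolding A_def by (rule finDq)
  have injA: "inj_on sc A" using sc_inj DqD Dsub unfolding A_def by (meson inj_on_subset order_trans)
  have cg: "[F k = Tb k] (mod int p)" for k
  proof -
    have "F k = (\<Sum>j\<in>A. b j * int (sc j) ^ k)"
      unfolding F_def b_def sh[symmetric] A_def using injA[unfolded A_def]
      by (simp add: sum.reindex)
    also have "[\<dots> = Tb k] (mod int p)" unfolding Tb_def
    proof (rule cong_sum, rule cong_mult)
      fix j show "[b j = b j] (mod int p)" by simp
      have "[int (sc j) = int j + 1] (mod int p)" using sc_modp by (simp add: cong_iff_dvd_diff)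
      then show "[int (sc j) ^ k = (int j + 1) ^ k] (mod int p)" by (rule cong_pow)
    qed
    finally show ?thesis .
  qed
  have Sa01: "int p dvd Sa 0" "int p dvd Sa 1" using mom[OF q, of 0] mom[OF q, of 1] unfolding Sa_def A_def by auto
  have Tb01: "int p dvd Tb 0" "int p dvd Tb 1"
    using mom[OF q'3, of 0] mom[OF q'3, of 1] cg[of 0] cg[of 1] cong_dvd_iff unfolding F_def by auto
  have G: "int p dvd Sa k + Tb k" if k: "k = 2 \<or> k = 3" for k
  proof -
    have sub: "A \<union> Dq q' \<subseteq> D" using DqD unfolding A_def by auto
    have dis: "A \<inter> Dq q' = {}" using qq unfolding A_def Dq_def by auto
    have "(\<Sum>i\<in>D. c i * int i ^ k) = (\<Sum>i\<in>A \<union> Dq q'. c i * int i ^ k) + (\<Sum>i\<in>D - (A \<union> Dq q'). c i * int i ^ k)"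
      by (rule split_sum[OF sub])
    also have "(\<Sum>i\<in>A \<union> Dq q'. c i * int i ^ k) = Sa k + F k"
      unfolding Sa_def F_def using dis finA finDq by (simp add: sum.union_disjoint)
    finally have e: "Sa k + F k = (\<Sum>i\<in>D. c i * int i ^ k) - (\<Sum>i\<in>D - (A \<union> Dq q'). c i * int i ^ k)" by simp
    have r: "int p dvd (\<Sum>i\<in>D - (A \<union> Dq q'). c i * int i ^ k)"
      by (intro dvd_sum dvd_mult2 oth) (auto simp: A_def Dq_def)
    have "int p dvd Sa k + F k" unfolding e by (rule dvd_diff[OF glob[OF k] r])
    moreover have "[Sa k + F k = Sa k + Tb k] (mod int p)" using cg by (intro cong_add) auto
    ultimately show ?thesis using cong_dvd_iff by blast
  qed
  have T0: "Tb 0 = Sb 0" unfolding Tb_def Sb_def by simp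
  have T1: "Tb 1 = Sb 1 + Sb 0" unfolding Tb_def Sb_def
    by (simp add: sum.distrib[symmetric] algebra_simps)
  have T2: "Tb 2 = Sb 2 + 2 * Sb 1 + Sb 0" unfolding Tb_def Sb_def
    by (simp add: sum.distrib[symmetric] sum_distrib_left algebra_simps power2_eq_square)
  have T3: "Tb 3 = Sb 3 + 3 * Sb 2 + 3 * Sb 1 + Sb 0" unfolding Tb_def Sb_def
    by (simp add: sum.distrib[symmetric] sum_distrib_left algebra_simps power3_eq_cube power2_eq_square)
  have Sb0: "int p dvd Sb 0" using Tb01 T0 by simp
  have Sb1: "int p dvd Sb 1" using Tb01 T1 T0 by (metis add_diff_cancel_right' dvd_diff)
  have U: "int p dvd Sa k + Sb k" if "k < 3" for k
  proof -
    have "k = 0 \<or> k = 1 \<or> k = 2" using that by auto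
    moreover have "int p dvd Sa 2 + Sb 2"
    proof -
      have e: "Sa 2 + Sb 2 = (Sa 2 + Tb 2) - 2 * Sb 1 - Sb 0" using T2 by simp
      show ?thesis unfolding e by (rule dvd_diff[OF dvd_diff[OF G[of 2] dvd_mult[OF Sb1]] Sb0]) simp
    qed
    ultimately show ?thesis using Sa01 Sb0 Sb1 by (auto intro: dvd_add)
  qed
  define u where "u j = c j + b j" for j
  have uS: "(\<Sum>j\<in>A. u j * int j ^ k) = Sa k + Sb k" for k
    unfolding u_def Sa_def Sb_def by (simp add: sum.distrib[symmetric] algebra_simps)
  have uz: "\<forall>j\<in>A. int p dvd u j"
    unfolding A_def by (rule vcls[OF q]) (use U uS c3 in \<open>auto simp: A_def\<close>)
  have "int p dvd Sa 3 + Sb 3" unfolding uS[symmetric]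
    using uz by (intro dvd_sum dvd_mult2) auto
  moreover have e: "3 * Sb 2 = (Sa 3 + Tb 3) - (Sa 3 + Sb 3) - 3 * Sb 1 - Sb 0" using T3 by simp
  ultimately have "int p dvd 3 * Sb 2" unfolding e
    by (intro dvd_diff G dvd_mult Sb0 Sb1) auto
  moreover have "\<not> int p dvd 3" using p7 by (auto dest: zdvd_imp_le)
  ultimately have Sb2: "int p dvd Sb 2" using prI by (simp add: prime_dvd_mult_iff)
  have bz: "\<forall>j\<in>A. int p dvd b j"
  proof (unfold A_def, rule vcls[OF q], intro allI impI)
    fix k assume "k < card (Dq q)"
    then have "k = 0 \<or> k = 1 \<or> k = 2" using c3 by auto
    then show "int p dvd (\<Sum>i\<in>Dq q. b i * int i ^ k)"
      using Sb0 Sb1 Sb2 unfolding Sb_def A_def by auto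
  qed
  have az: "\<forall>j\<in>A. int p dvd c j"
  proof
    fix j assume "j \<in> A"
    then have "int p dvd u j - b j" using uz bz by (simp add: dvd_diff)
    then show "int p dvd c j" by (simp add: u_def)
  qed
  have "Z q" using az unfolding Z_def A_def by simp
  moreover have "Z q'" unfolding Z_def sh[symmetric] using bz unfolding b_def A_def by auto
  ultimately show ?thesis by simp
qed

definition "Pq q = {i\<in>P. i mod 3 = q}"
definition "Yq q = {i. i < n \<and> i mod 3 = q \<and> sc i \<in> D}"

lemma Pq_un: "Pq q = Dq q \<union> Yq q"
  using Dsub unfolding Pq_def Dq_def Yq_def P_def by auto

lemma finPq: "finite (Pq q)" using finP unfolding Pq_def by simp

lemma cardY:
  assumes q: "q < 3"
  shows "card (Yq q) = card (Dq ((q + 1) mod 3))"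
proof -
  have "sc ` Yq q = Dq ((q + 1) mod 3)"
  proof
    show "sc ` Yq q \<subseteq> Dq ((q + 1) mod 3)"
      unfolding Yq_def Dq_def using sc_mod3 by (auto simp: mod_Suc_eq)
    show "Dq ((q + 1) mod 3) \<subseteq> sc ` Yq q"
    proof
      fix j assume j: "j \<in> Dq ((q + 1) mod 3)"
      then have "j < n" using Dsub DqD by auto
      then obtain i where i: "i < n" "j = sc i" using sc_surj by (metis imageE lessThan_iff)
      have "(i + 1) mod 3 = (q + 1) mod 3" using j i sc_mod3 unfolding Dq_def by auto
      then have "i mod 3 = q" using q by presburger
      then show "j \<in> sc ` Yq q" using i j DqD unfolding Yq_def by auto
    qed
  qed
  moreover have "inj_on sc (Yq q)" using sc_inj by (rule inj_on_subset) (auto simp: Yq_def)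
  ultimately show ?thesis by (metis card_image)
qed

lemma cardP3: "card P = card (Pq 0) + card (Pq 1) + card (Pq 2)"
proof -
  have "P = Pq 0 \<union> Pq 1 \<union> Pq 2" unfolding Pq_def by auto
  moreover have "card (Pq 0 \<union> Pq 1) = card (Pq 0) + card (Pq 1)"
    using finPq by (intro card_Un_disjoint) (auto simp: Pq_def)
  moreover have "card (Pq 0 \<union> Pq 1 \<union> Pq 2) = card (Pq 0 \<union> Pq 1) + card (Pq 2)"
    using finPq by (intro card_Un_disjoint) (auto simp: Pq_def)
  ultimately show ?thesis by simp
qed

lemma Pq_ge: "card (Dq q) \<le> card (Pq q)" "card (Yq q) \<le> card (Pq q)"
  using Pq_un finPq by (auto intro: card_mono)

lemma Eq:
  assumes q: "q < 3" and a: "card (Pq q) \<le> card (Dq q)" and b: "card (Pq q) \<le> card (Dq ((q + 1) mod 3))"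
  shows "sc ` Dq q = Dq ((q + 1) mod 3)"
proof -
  have "Dq q = Pq q" using Pq_un finPq a Pq_ge(1)[of q]
    by (intro card_subset_eq) auto
  moreover have "Yq q = Pq q" using Pq_un finPq b Pq_ge(2)[of q] cardY[OF q]
    by (intro card_subset_eq) auto
  ultimately have "Dq q = Yq q" by simp
  moreover have "sc ` Yq q = Dq ((q + 1) mod 3)"
  proof -
    have "sc ` Yq q \<subseteq> Dq ((q + 1) mod 3)"
      unfolding Yq_def Dq_def using sc_mod3 by (auto simp: mod_Suc_eq)
    moreover have "inj_on sc (Yq q)" using sc_inj by (rule inj_on_subset) (auto simp: Yq_def)
    ultimately show ?thesis using cardY[OF q] finDq
      by (metis card_image card_subset_eq)
  qed
  ultimately show ?thesis by simp
qed

lemma L_three: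
  assumes "sc ` Dq 0 = Dq 1" "sc ` Dq 1 = Dq 2" "sc ` Dq 2 = Dq 0" "D \<noteq> {}"
  shows False
proof -
  have cl: "sc i \<in> D" if "i \<in> D" for i
  proof -
    have iD: "i \<in> Dq (i mod 3)" using that unfolding Dq_def by simp
    have "i mod 3 = 0 \<or> i mod 3 = 1 \<or> i mod 3 = 2" by auto
    then have "sc i \<in> Dq 0 \<or> sc i \<in> Dq 1 \<or> sc i \<in> Dq 2"
      using iD assms(1-3) by (metis image_eqI)
    then show ?thesis using DqD by blast
  qed
  obtain s where s: "s \<in> D" using assms(4) by auto
  have sn: "s < n" using s Dsub by auto
  have it: "(s + k) mod n \<in> D" for k
  proof (induction k)
    case 0 then show ?case using s sn by simp
  next
    case (Suc k)
    have "(s + Suc k) mod n = sc ((s + k) mod n)" unfolding sc_def by (simp add: mod_Suc_eq)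
    then show ?case using cl Suc by simp
  qed
  have "{..<n} \<subseteq> D"
  proof
    fix j assume "j \<in> {..<n}"
    then have j: "j < n" by simp
    have "(s + (j + n - s)) mod n = j" using sn j by simp
    then show "j \<in> D" using it[of "j + n - s"] by simp
  qed
  then have "n \<le> card D" using finD by (metis card_lessThan card_mono)
  also have "\<dots> \<le> card P" using DP finP by (rule card_mono[rotated])
  finally show False using Pcard p7 nd by simp
qed

lemma oth2:
  assumes "Z r" "r < 3" "q \<noteq> r" "q' \<noteq> r" "i \<in> D" "i mod 3 \<noteq> q" "i mod 3 \<noteq> q'" "q < 3" "q' < 3" "q \<noteq> q'"
  shows "int p dvd c i"
proof -
  have "i mod 3 = r" using assms by presburger
  then show ?thesis using assms unfolding Z_def Dq_def by auto
qed

lemma allZ: "Z 0 \<and> Z 1 \<and> Z 2"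
proof -
  define a where "a q = card (Dq q)" for q
  define b where "b q = card (Pq q)" for q
  have bs: "b 0 + b 1 + b 2 \<le> 9" using Pcard cardP3 unfolding b_def by simp
  have ba: "a 0 \<le> b 0" "a 1 \<le> b 1" "a 2 \<le> b 2" using Pq_ge(1) unfolding a_def b_def by auto
  have y0: "card (Yq 0) = card (Dq 1)" using cardY[of 0] by simp
  have y1: "card (Yq 1) = card (Dq 2)" using cardY[of 1] by (simp add: numeral_2_eq_2)
  have y2: "card (Yq 2) = card (Dq 0)" using cardY[of 2] by simp
  have bn: "a 1 \<le> b 0" "a 2 \<le> b 1" "a 0 \<le> b 2"
    using Pq_ge(2)[of 0] Pq_ge(2)[of 1] Pq_ge(2)[of 2] y0 y1 y2
    unfolding a_def b_def by simp_all
  have sm: "a q \<le> 2 \<Longrightarrow> q < 3 \<Longrightarrow> Z q" for q using L_small unfolding a_def by blast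
  have E0: "b 0 \<le> a 0 \<Longrightarrow> b 0 \<le> a 1 \<Longrightarrow> sc ` Dq 0 = Dq 1" using Eq[of 0] unfolding a_def b_def by auto
  have E1: "b 1 \<le> a 1 \<Longrightarrow> b 1 \<le> a 2 \<Longrightarrow> sc ` Dq 1 = Dq 2" using Eq[of 1] unfolding a_def b_def by (auto simp: numeral_2_eq_2)
  have E2: "b 2 \<le> a 2 \<Longrightarrow> b 2 \<le> a 0 \<Longrightarrow> sc ` Dq 2 = Dq 0" using Eq[of 2] unfolding a_def b_def by auto
  have T0: "a 0 = 3 \<Longrightarrow> sc ` Dq 0 = Dq 1 \<Longrightarrow> Z 2 \<Longrightarrow> Z 0 \<and> Z 1"
    using L_two[of 0 1] oth2[of 2 0 1] unfolding a_def by auto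
  have T1: "a 1 = 3 \<Longrightarrow> sc ` Dq 1 = Dq 2 \<Longrightarrow> Z 0 \<Longrightarrow> Z 1 \<and> Z 2"
    using L_two[of 1 2] oth2[of 0 1 2] unfolding a_def by (auto simp: numeral_2_eq_2)
  have T2: "a 2 = 3 \<Longrightarrow> sc ` Dq 2 = Dq 0 \<Longrightarrow> Z 1 \<Longrightarrow> Z 2 \<and> Z 0"
    using L_two[of 2 0] oth2[of 1 2 0] unfolding a_def by auto
  have O0: "a 0 \<le> 4 \<Longrightarrow> Z 1 \<Longrightarrow> Z 2 \<Longrightarrow> Z 0"
  proof -
    assume h: "a 0 \<le> 4" "Z 1" "Z 2"
    show "Z 0"
    proof (rule L_one)
      fix i assume i: "i \<in> D" "i mod 3 \<noteq> 0"
      then have "i mod 3 = 1 \<or> i mod 3 = 2" by auto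
      then show "int p dvd c i" using h i unfolding Z_def Dq_def by auto
    qed (use h in \<open>auto simp: a_def\<close>)
  qed
  have O1: "a 1 \<le> 4 \<Longrightarrow> Z 0 \<Longrightarrow> Z 2 \<Longrightarrow> Z 1"
  proof -
    assume h: "a 1 \<le> 4" "Z 0" "Z 2"
    show "Z 1"
    proof (rule L_one)
      fix i assume i: "i \<in> D" "i mod 3 \<noteq> 1"
      then have "i mod 3 = 0 \<or> i mod 3 = 2" by auto
      then show "int p dvd c i" using h i unfolding Z_def Dq_def by auto
    qed (use h in \<open>auto simp: a_def\<close>)
  qed
  have O2: "a 2 \<le> 4 \<Longrightarrow> Z 0 \<Longrightarrow> Z 1 \<Longrightarrow> Z 2"
  proof -
    assume h: "a 2 \<le> 4" "Z 0" "Z 1"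
    show "Z 2"
    proof (rule L_one)
      fix i assume i: "i \<in> D" "i mod 3 \<noteq> 2"
      then have "i mod 3 = 0 \<or> i mod 3 = 1" by auto
      then show "int p dvd c i" using h i unfolding Z_def Dq_def by auto
    qed (use h in \<open>auto simp: a_def\<close>)
  qed
  have thr: "sc ` Dq 0 = Dq 1 \<Longrightarrow> sc ` Dq 1 = Dq 2 \<Longrightarrow> sc ` Dq 2 = Dq 0 \<Longrightarrow> a 0 = 3 \<Longrightarrow> False"
  proof -
    assume h: "sc ` Dq 0 = Dq 1" "sc ` Dq 1 = Dq 2" "sc ` Dq 2 = Dq 0" "a 0 = 3"
    then have "D \<noteq> {}" using DqD unfolding a_def by (metis card.empty subset_empty zero_neq_numeral)
    then show False using L_three h by blast
  qed
  have le4: "a 0 \<le> 4" "a 1 \<le> 4" "a 2 \<le> 4" using bs ba bn by linarith+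
  show ?thesis
  proof (cases "a 0 \<ge> 3 \<and> a 1 \<ge> 3")
    case True
    then have bb: "b 0 = 3" "b 1 = 3" "b 2 = 3" "a 0 = 3" "a 1 = 3" using bs ba bn by linarith+
    have e0: "sc ` Dq 0 = Dq 1" using E0 bb by simp
    show ?thesis
    proof (cases "a 2 \<le> 2")
      case True then show ?thesis using sm[of 2] T0 bb e0 by auto
    next
      case False
      then have "a 2 = 3" using bb ba bn by linarith
      then show ?thesis using thr e0 E1 E2 bb by simp
    qed
  next
    case n01: False
    show ?thesis
    proof (cases "a 1 \<ge> 3 \<and> a 2 \<ge> 3")
      case True
      then have bb: "b 0 = 3" "b 1 = 3" "b 2 = 3" "a 1 = 3" "a 2 = 3" using bs ba bn by linarith+
      have e1: "sc ` Dq 1 = Dq 2" using E1 bb by simp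
      have "a 0 \<le> 2" using n01 bb by linarith
      then show ?thesis using sm[of 0] T1 bb e1 by auto
    next
      case n12: False
      show ?thesis
      proof (cases "a 2 \<ge> 3 \<and> a 0 \<ge> 3")
        case True
        then have bb: "b 0 = 3" "b 1 = 3" "b 2 = 3" "a 2 = 3" "a 0 = 3" using bs ba bn by linarith+
        have e2: "sc ` Dq 2 = Dq 0" using E2 bb by simp
        have "a 1 \<le> 2" using n01 bb by linarith
        then show ?thesis using sm[of 1] T2 bb e2 by auto
      next
        case n20: False
        show ?thesis
        proof (cases "a 0 \<ge> 3")
          case True
          then have "a 1 \<le> 2" "a 2 \<le> 2" using n01 n20 by auto
          then show ?thesis using sm[of 1] sm[of 2] O0 le4 by auto
        next
          case f0: False
          show ?thesis
          proof (cases "a 1 \<ge> 3")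
            case True
            then have "a 2 \<le> 2" using n12 by auto
            then show ?thesis using sm[of 0] sm[of 2] O1 le4 f0 by auto
          next
            case False
            then show ?thesis using sm[of 0] sm[of 1] O2 le4 f0 by auto
          qed
        qed
      qed
    qed
  qed
qed

theorem all_dvd: "\<forall>i\<in>D. int p dvd c i"
proof
  fix i assume i: "i \<in> D"
  have "i mod 3 = 0 \<or> i mod 3 = 1 \<or> i mod 3 = 2" by auto
  then show "int p dvd c i" using allZ i unfolding Z_def Dq_def by auto
qed

end



lemma words_eq: "words q m = {xs. set xs \<subseteq> {0..<q} \<and> length xs = m}"
  unfolding words_def by auto

lemma card_words: "card (words q m) = q ^ m"
  unfolding words_eq by (simp add: card_lists_length_eq)

lemma fin_words: "finite (words q m)"
  unfolding words_eq by (simp add: finite_lists_length_eq)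

lemma words_nth: "x \<in> words q m \<Longrightarrow> i < m \<Longrightarrow> x ! i < q"
  unfolding words_def by (auto dest!: nth_mem)

lemma use_core:
  fixes p :: nat
  assumes pr: "prime p" and p7: "7 \<le> p"
    and x: "x \<in> words p (3 * p)" and y: "y \<in> words p (3 * p)"
    and chk: "\<forall>j<8. int p dvd (\<Sum>i<3 * p. (int (x ! i) - int (y ! i)) * wt j i)"
    and Pc: "card {i. i < 3 * p \<and> (x ! i \<noteq> y ! i \<or> x ! ((i + 1) mod (3 * p)) \<noteq> y ! ((i + 1) mod (3 * p)))} \<le> 9"
  shows "x = y"
proof -
  define n where "n = 3 * p"
  define D where "D = {i. i < n \<and> x ! i \<noteq> y ! i}"
  define c where "c i = int (x ! i) - int (y ! i)" for i
  have "{i. i < n \<and> (i \<in> D \<or> (i + 1) mod n \<in> D)} = {i. i < 3 * p \<and> (x ! i \<noteq> y ! i \<or> x ! ((i + 1) mod (3 * p)) \<noteq> y ! ((i + 1) mod (3 * p)))}"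
    using p7 unfolding D_def n_def by auto
  then have Pc': "card {i. i < n \<and> (i \<in> D \<or> (i + 1) mod n \<in> D)} \<le> 9" using Pc by simp
  interpret core p n c D
    by unfold_locales (use pr p7 chk Pc' in \<open>auto simp: n_def D_def c_def\<close>)
  have "D = {}"
  proof (rule ccontr)
    assume "D \<noteq> {}"
    then obtain i where i: "i \<in> D" by auto
    then have "int p dvd int (x ! i) - int (y ! i)" using all_dvd c_def by auto
    then have "[x ! i = y ! i] (mod p)" by (metis cong_iff_dvd_diff cong_int_iff)
    moreover have "x ! i < p" "y ! i < p" using i x y words_nth unfolding D_def n_def by auto
    ultimately have "x ! i = y ! i" using cong_less_modulus_unique_nat by blast
    then show False using i D_def by auto
  qed
  moreover have "length x = n" "length y = n" using x y unfolding words_def n_def by auto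
  ultimately show "x = y" unfolding D_def by (auto intro: nth_equalityI)
qed

lemma pd_eq:
  assumes "length x = n" "length y = n"
  shows "pair_dist x y = card {i. i < n \<and> (x ! i \<noteq> y ! i \<or> x ! ((i + 1) mod n) \<noteq> y ! ((i + 1) mod n))}"
  unfolding pair_dist_def Let_def using assms
  by (intro arg_cong[where f=card]) auto

definition codeC :: "nat \<Rightarrow> nat list set" where
  "codeC p = {x \<in> words p (3 * p). \<forall>j<8. int p dvd (\<Sum>i<3 * p. int (x ! i) * wt j i)}"

lemma codeC_chk:
  assumes "x \<in> codeC p" "y \<in> codeC p"
  shows "\<forall>j<8. int p dvd (\<Sum>i<3 * p. (int (x ! i) - int (y ! i)) * wt j i)"
proof (intro allI impI)
  fix j :: nat assume j: "j < 8"
  have "(\<Sum>i<3 * p. (int (x ! i) - int (y ! i)) * wt j i) = (\<Sum>i<3 * p. int (x ! i) * wt j i) - (\<Sum>i<3 * p. int (y ! i) * wt j i)"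
    by (simp add: sum_subtractf left_diff_distrib)
  then show "int p dvd (\<Sum>i<3 * p. (int (x ! i) - int (y ! i)) * wt j i)"
    using assms j unfolding codeC_def by (simp add: dvd_diff)
qed

lemma card_le9:
  fixes n :: nat
  assumes "\<And>i. i < n \<Longrightarrow> Q i \<Longrightarrow> i < 8 \<or> i = n - 1"
  shows "card {i. i < n \<and> Q i} \<le> 9"
proof -
  have "{i. i < n \<and> Q i} \<subseteq> insert (n - 1) {..<8}" using assms by auto
  then have "card {i. i < n \<and> Q i} \<le> card (insert (n - 1) {..<(8::nat)})" by (intro card_mono) auto
  also have "\<dots> \<le> 9" using card_insert_le_m1[of 9 "{..<(8::nat)}"] by simp
  finally show ?thesis .
qed

lemma card_le10:
  fixes n :: nat
  assumes "\<And>i. i < n \<Longrightarrow> Q i \<Longrightarrow> i < 9 \<or> i = n - 1"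
  shows "card {i. i < n \<and> Q i} \<le> 10"
proof -
  have "{i. i < n \<and> Q i} \<subseteq> insert (n - 1) {..<9}" using assms by auto
  then have "card {i. i < n \<and> Q i} \<le> card (insert (n - 1) {..<(9::nat)})" by (intro card_mono) auto
  also have "\<dots> \<le> 10" using card_insert_le_m1[of 10 "{..<(9::nat)}"] by simp
  finally show ?thesis .
qed

lemma dist_ge:
  assumes pr: "prime p" and p7: "7 \<le> p" and x: "x \<in> codeC p" and y: "y \<in> codeC p" and ne: "x \<noteq> y"
  shows "10 \<le> pair_dist x y"
proof (rule ccontr)
  assume "\<not> 10 \<le> pair_dist x y"
  moreover have "length x = 3 * p" "length y = 3 * p" using x y unfolding codeC_def words_def by auto
  ultimately have "card {i. i < 3 * p \<and> (x ! i \<noteq> y ! i \<or> x ! ((i + 1) mod (3 * p)) \<noteq> y ! ((i + 1) mod (3 * p)))} \<le> 9"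
    using pd_eq by simp
  then have "x = y" using use_core[OF pr p7 _ _ codeC_chk[OF x y]] x y unfolding codeC_def by auto
  then show False using ne by simp
qed

lemma drop_agree:
  assumes "length x = n" "length y = n" "drop m x = drop m y" "i < n" "x ! i \<noteq> y ! i"
  shows "i < m"
proof (rule ccontr)
  assume "\<not> i < m"
  then have mi: "m \<le> i" by simp
  have "drop m x ! (i - m) = x ! i" using nth_drop[of m x "i - m"] mi assms(1,4) by simp
  moreover have "drop m y ! (i - m) = y ! i" using nth_drop[of m y "i - m"] mi assms(2,4) by simp
  ultimately show False using assms(3,5) by metis
qed

lemma agree_close:
  assumes pr: "prime p" and p7: "7 \<le> p" and x: "x \<in> codeC p" and y: "y \<in> codeC p"
    and d: "drop m x = drop m y"
  shows "card {i. i < 3 * p \<and> (x ! i \<noteq> y ! i \<or> x ! ((i + 1) mod (3 * p)) \<noteq> y ! ((i + 1) mod (3 * p)))}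
     \<le> card {i. i < 3 * p \<and> (i < m \<or> i = 3 * p - 1)}"
proof (rule card_mono)
  have lx: "length x = 3 * p" "length y = 3 * p" using x y unfolding codeC_def words_def by auto
  show "{i. i < 3 * p \<and> (x ! i \<noteq> y ! i \<or> x ! ((i + 1) mod (3 * p)) \<noteq> y ! ((i + 1) mod (3 * p)))}
     \<subseteq> {i. i < 3 * p \<and> (i < m \<or> i = 3 * p - 1)}"
  proof safe
    fix i assume i: "i < 3 * p" and ne: "x ! ((i + 1) mod (3 * p)) \<noteq> y ! ((i + 1) mod (3 * p))"
      and nl: "i \<noteq> 3 * p - 1"
    then have "i + 1 < 3 * p" by auto
    then have "(i + 1) mod (3 * p) = i + 1" by simp
    then have "i + 1 < m" using drop_agree[OF lx d, of "i + 1"] ne \<open>i + 1 < 3 * p\<close> by simp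
    then show "i < m" by simp
  next
    fix i assume "i < 3 * p" "x ! i \<noteq> y ! i" "i \<noteq> 3 * p - 1"
    then show "i < m" using drop_agree[OF lx d] by blast
  qed
qed simp

lemma card_small: "card {i. i < (n::nat) \<and> (i < m \<or> i = n - 1)} \<le> m + 1"
proof -
  have "{i. i < n \<and> (i < m \<or> i = n - 1)} \<subseteq> insert (n - 1) {..<m}" by auto
  then have "card {i. i < n \<and> (i < m \<or> i = n - 1)} \<le> card (insert (n - 1) {..<m})" by (intro card_mono) auto
  also have "\<dots> \<le> m + 1" by (simp add: card_insert_if)
  finally show ?thesis .
qed

lemma card_le:
  assumes pr: "prime p" and p7: "7 \<le> p"
  shows "card (codeC p) \<le> p ^ (3 * p - 8)"
proof -
  have inj: "inj_on (drop 8) (codeC p)"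
  proof
    fix x y assume x: "x \<in> codeC p" and y: "y \<in> codeC p" and d: "drop 8 x = drop 8 y"
    have "card {i. i < 3 * p \<and> (x ! i \<noteq> y ! i \<or> x ! ((i + 1) mod (3 * p)) \<noteq> y ! ((i + 1) mod (3 * p)))} \<le> 9"
      using agree_close[OF pr p7 x y d] card_small[of "3 * p" 8] by simp
    then show "x = y" using use_core[OF pr p7 _ _ codeC_chk[OF x y]] x y unfolding codeC_def by auto
  qed
  have "drop 8 ` codeC p \<subseteq> words p (3 * p - 8)"
    unfolding codeC_def words_def by (auto dest: in_set_dropD)
  then have "card (drop 8 ` codeC p) \<le> card (words p (3 * p - 8))"
    by (intro card_mono fin_words)
  then show ?thesis using card_image[OF inj] card_words by simp
qed

definition syn :: "nat \<Rightarrow> nat list \<Rightarrow> int list" where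
  "syn p x = map (\<lambda>j. (\<Sum>i<3 * p. int (x ! i) * wt j i) mod int p) [0..<8]"

lemma fiber_le:
  assumes p0: "0 < p" and x0: "x0 \<in> words p (3 * p)"
  shows "card {x \<in> words p (3 * p). syn p x = syn p x0} \<le> card (codeC p)"
proof -
  define F where "F = {x \<in> words p (3 * p). syn p x = syn p x0}"
  define f where "f x = map (\<lambda>i. nat ((int (x ! i) - int (x0 ! i)) mod int p)) [0..<3 * p]" for x
  have fn: "int (f x ! i) = (int (x ! i) - int (x0 ! i)) mod int p" if "i < 3 * p" for x i
    using that p0 unfolding f_def by simp
  have inj: "inj_on f F"
  proof
    fix x y assume x: "x \<in> F" and y: "y \<in> F" and e: "f x = f y"
    have lx: "length x = 3 * p" "length y = 3 * p" using x y unfolding F_def words_def by auto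
    show "x = y"
    proof (rule nth_equalityI)
      show "length x = length y" using lx by simp
      fix i assume "i < length x"
      then have i: "i < 3 * p" using lx by simp
      have "(int (x ! i) - int (x0 ! i)) mod int p = (int (y ! i) - int (x0 ! i)) mod int p"
        using fn[OF i, of x] fn[OF i, of y] e by simp
      then have "[int (x ! i) - int (x0 ! i) = int (y ! i) - int (x0 ! i)] (mod int p)" by (simp add: cong_def)
      then have "[int (x ! i) = int (y ! i)] (mod int p)" by (simp add: cong_iff_dvd_diff)
      then have "[x ! i = y ! i] (mod p)" by (simp add: cong_int_iff)
      moreover have "x ! i < p" "y ! i < p" using x y i words_nth unfolding F_def by auto
      ultimately show "x ! i = y ! i" using cong_less_modulus_unique_nat by blast
    qed
  qed
  have img: "f ` F \<subseteq> codeC p"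
  proof
    fix z assume "z \<in> f ` F"
    then obtain x where x: "x \<in> F" and z: "z = f x" by auto
    have zw: "z \<in> words p (3 * p)"
      unfolding z words_def f_def using p0 by (auto simp: nat_less_iff)
    have "int p dvd (\<Sum>i<3 * p. int (z ! i) * wt j i)" if j: "j < 8" for j
    proof -
      have "[(\<Sum>i<3 * p. int (z ! i) * wt j i) = (\<Sum>i<3 * p. (int (x ! i) - int (x0 ! i)) * wt j i)] (mod int p)"
      proof (rule cong_sum, rule cong_mult)
        fix i assume "i \<in> {..<3 * p}"
        then show "[int (z ! i) = int (x ! i) - int (x0 ! i)] (mod int p)"
          using fn z by (simp add: cong_def)
      qed simp
      moreover have "(\<Sum>i<3 * p. (int (x ! i) - int (x0 ! i)) * wt j i) = (\<Sum>i<3 * p. int (x ! i) * wt j i) - (\<Sum>i<3 * p. int (x0 ! i) * wt j i)"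
        by (simp add: sum_subtractf left_diff_distrib)
      moreover have "(\<Sum>i<3 * p. int (x ! i) * wt j i) mod int p = (\<Sum>i<3 * p. int (x0 ! i) * wt j i) mod int p"
      proof -
        have "syn p x ! j = syn p x0 ! j" using x unfolding F_def by simp
        then show ?thesis using j unfolding syn_def by simp
      qed
      ultimately show ?thesis by (simp add: cong_dvd_iff mod_eq_dvd_iff)
    qed
    then show "z \<in> codeC p" using zw unfolding codeC_def by simp
  qed
  have "card F = card (f ` F)" using card_image[OF inj] by simp
  also have "\<dots> \<le> card (codeC p)"
    using img by (intro card_mono) (auto intro: finite_subset[OF _ fin_words] simp: codeC_def)
  finally show ?thesis unfolding F_def .
qed

lemma card_ge:
  assumes p0: "0 < p" and p3: "8 \<le> 3 * p"
  shows "p ^ (3 * p - 8) \<le> card (codeC p)"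
proof -
  define W where "W = words p (3 * p)"
  define S where "S = syn p ` W"
  have W: "W = (\<Union>s\<in>S. {x \<in> W. syn p x = s})" unfolding S_def by auto
  have Ssub: "S \<subseteq> {l. set l \<subseteq> {0..<int p} \<and> length l = 8}"
    unfolding S_def syn_def using p0 by auto
  have finS: "finite S" using finite_subset[OF Ssub] finite_lists_length_eq[of "{0..<int p}"] by simp
  have cS: "card S \<le> p ^ 8"
  proof -
    have "card S \<le> card {l. set l \<subseteq> {0..<int p} \<and> length l = 8}"
      using Ssub finite_lists_length_eq[of "{0..<int p}"] by (intro card_mono) auto
    then show ?thesis by (simp add: card_lists_length_eq)
  qed
  have "p ^ (3 * p) = card W" unfolding W_def by (simp add: card_words)
  also have "\<dots> \<le> (\<Sum>s\<in>S. card {x \<in> W. syn p x = s})"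
    by (subst W) (rule card_UN_le[OF finS])
  also have "\<dots> \<le> (\<Sum>s\<in>S. card (codeC p))"
  proof (rule sum_mono)
    fix s assume "s \<in> S"
    then obtain x0 where "x0 \<in> W" "s = syn p x0" unfolding S_def by auto
    then show "card {x \<in> W. syn p x = s} \<le> card (codeC p)"
      using fiber_le[OF p0] unfolding W_def by simp
  qed
  also have "\<dots> = card S * card (codeC p)" by simp
  also have "\<dots> \<le> p ^ 8 * card (codeC p)" using cS by (rule mult_right_mono) simp
  finally have "p ^ 8 * p ^ (3 * p - 8) \<le> p ^ 8 * card (codeC p)"
    using p3 by (simp add: power_add[symmetric])
  then show ?thesis using p0 by simp
qed

theorem theorem1:
  fixes p :: nat
  assumes "prime p" and "odd p" and "3 dvd (p - 1)"
  shows "\<exists>C. C \<subseteq> words p (3 * p) \<and> min_pair_dist C = 10 \<and> card C = p ^ (3 * p - 10 + 2)"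
proof -
  have pr: "prime p" by fact
  have p7: "7 \<le> p"
  proof -
    have p2: "2 \<le> p" using pr prime_ge_2_nat by blast
    obtain k where k: "p - 1 = 3 * k" using assms(3) by auto
    have "p \<noteq> 2" using assms(2) by auto
    moreover have "p \<noteq> 4" using assms(2) by auto
    ultimately show ?thesis using k p2 by (cases k) (auto, presburger)
  qed
  define C where "C = codeC p"
  have sub: "C \<subseteq> words p (3 * p)" unfolding C_def codeC_def by auto
  have cardC: "card C = p ^ (3 * p - 8)" unfolding C_def
    using card_le[OF pr p7] card_ge[of p] p7 by simp
  have finC: "finite C" using finite_subset[OF sub fin_words] .
  define Sd where "Sd = {pair_dist x y | x y. x \<in> C \<and> y \<in> C \<and> x \<noteq> y}"
  have finSd: "finite Sd"
  proof -
    have "Sd \<subseteq> (\<lambda>(x, y). pair_dist x y) ` (C \<times> C)" unfolding Sd_def by auto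
    then show ?thesis using finC finite_subset by blast
  qed
  have ge: "\<forall>d\<in>Sd. 10 \<le> d" unfolding Sd_def C_def using dist_ge[OF pr p7] by auto
  obtain x y where xy: "x \<in> C" "y \<in> C" "x \<noteq> y" "drop 9 x = drop 9 y"
  proof -
    have "card (drop 9 ` C) \<le> card (words p (3 * p - 9))"
      using sub unfolding words_def by (intro card_mono fin_words[unfolded words_def]) (auto dest: in_set_dropD)
    also have "\<dots> = p ^ (3 * p - 9)" by (rule card_words)
    also have "\<dots> < p ^ (3 * p - 8)" using p7 by (intro power_strict_increasing) auto
    finally have "\<not> inj_on (drop 9) C" using cardC card_image by fastforce
    then show ?thesis using that unfolding inj_on_def by blast
  qed
  have lx: "length x = 3 * p" "length y = 3 * p" using xy sub unfolding words_def by auto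
  have "pair_dist x y \<le> 10"
    using pd_eq[OF lx] agree_close[OF pr p7 _ _ xy(4)] xy card_small[of "3 * p" 9]
    unfolding C_def by fastforce
  then have "10 \<in> Sd" using ge xy unfolding Sd_def by (metis (mono_tags, lifting) le_antisym mem_Collect_eq)
  then have "min_pair_dist C = 10" unfolding min_pair_dist_def Sd_def[symmetric]
    using finSd ge by (intro Min_eqI) auto
  moreover have "3 * p - 10 + 2 = 3 * p - 8" using p7 by simp
  ultimately show ?thesis using sub cardC by auto
qed

end
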